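(* Assume the hypotheses of Theorem 6: $(P_{\mathcal C})$ under Assumption A; $\{x^k\}$, $\{y^k\}$ ($y^k\in\partial h(x^k)$) well-defined bounded DCA sequences from $x^0\in\operatorname{dom}\partial h$; $f$ continuous on $\operatorname{dom}f$; $\rho_g+\rho_h>0$; $h$ differentiable with locally Lipschitz continuous gradient. Let $f^*=\lim_kf(x^k)$ and $\Psi=f+\chi_{\mathcal C}-f^*$, and suppose $\Psi$ satisfies the KL property around the set of cluster points of $\{x^k\}$ with $\varphi(t)=Mt^{1-\theta}$, i.e., there exist $M>0$, $\theta\in[0,1)$, $\eta\in(0,\infty]$ and a neighbourhood $\mathcal V$ of the set of cluster points of $\{x^k\}$ such that $\varphi'(\Psi(x))\operatorname{dist}(0,\partial^L\Psi(x))\ge1$ for all $x\in\mathcal V$ with $\Psi(x)\in(0,\eta)$. Then: (i) if $\theta=0$, $f(x^k)=f^*$ for all sufficiently large $k$; (ii) if $\theta\in(0,\tfrac12]$, there is $q\in(0,1)$ with $f(x^k)-f^*=O(q^k)$ as $k\to\infty$; (iii) if $\theta\in(\tfrac12,1)$, then $f(x^k)-f^*=O\big(k^{\frac{1}{1-2\theta}}\big)$ as $k\to\infty$.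
   Context: $\Gamma_0(\mathbb{R}^n)$ is the set of proper, lower semicontinuous, convex functions $\mathbb{R}^n\to(-\infty,\infty]$. Let $g,h\in\Gamma_0(\mathbb{R}^n)$, $\mathcal C\subseteq\mathbb R^n$ nonempty closed convex with indicator $\chi_{\mathcal C}$, and $f=g-h$ with convention $\infty-\infty=\infty$. Problem $(P_{\mathcal C})$: $\inf\{f(x):x\in\mathcal C\}$ (standard program: $\mathcal C=\mathbb R^n$). Assumption A: $g,h\in\Gamma_0(\mathbb{R}^n)$ and the solution set of $(P_{\mathcal C})$ is nonempty. DCA: given $x^0\in\operatorname{dom}\partial h$, for $k=0,1,\dots$ choose $y^k\in\partial h(x^k)$ and $x^{k+1}\in\operatorname{argmin}\{g(x)-\langle y^k,x\rangle: x\in\mathcal C\}$. Convexity moduli: $\rho_g,\rho_h\ge0$ constants with $g(z)\ge g(x)+\langle w,z-x\rangle+\frac{\rho_g}{2}\|z-x\|^2$ and $h(z)\ge h(x)+\langle v,z-x\rangle+\frac{\rho_h}{2}\|z-x\|^2$ for all $x,z\in\mathcal C$, $w\in\partial g(x)$, $v\in\partial h(x)$. Fréchet and limiting subdifferentials: $\partial^F\phi(x)=\{y:\liminf_{z\to x,z\neq x}\frac{\phi(z)-\phi(x)-\langle y,z-x\rangle}{\|z-x\|}\ge0\}$, $\partial^L\phi(x)=\{y:\exists x^j\to x,\ \phi(x^j)\to\phi(x),\ y^j\in\partial^F\phi(x^j),\ y^j\to y\}$; $\operatorname{dist}(0,S)=\inf\{\|y\|:y\in S\}$. *)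

theory Defs
  imports "HOL-Analysis.Analysis" "HOL-Library.Landau_Symbols"
begin

text \<open>Extended-real-valued functions on a Euclidean space model functions into (-inf, inf].\<close>

definition proper_fun :: "('a \<Rightarrow> ereal) \<Rightarrow> bool" where
  "proper_fun g \<longleftrightarrow> (\<forall>x. g x \<noteq> -\<infinity>) \<and> (\<exists>x. g x \<noteq> \<infinity>)"

definition lsc_fun :: "('a::topological_space \<Rightarrow> ereal) \<Rightarrow> bool" where
  "lsc_fun g \<longleftrightarrow> (\<forall>x. g x \<le> Liminf (at x) g)"

definition convex_fun :: "('a::real_vector \<Rightarrow> ereal) \<Rightarrow> bool" where
  "convex_fun g \<longleftrightarrow> convex {(x, r::real). g x \<le> ereal r}"

definition Gamma0 :: "('a::euclidean_space \<Rightarrow> ereal) set" where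
  "Gamma0 = {g. proper_fun g \<and> lsc_fun g \<and> convex_fun g}"

definition edom :: "('a \<Rightarrow> ereal) \<Rightarrow> 'a set" where
  "edom g = {x. g x < \<infinity>}"

definition csubdiff :: "('a::euclidean_space \<Rightarrow> ereal) \<Rightarrow> 'a \<Rightarrow> 'a set" where
  "csubdiff g x = {y. \<bar>g x\<bar> \<noteq> \<infinity> \<and> (\<forall>z. g z \<ge> g x + ereal (y \<bullet> (z - x)))}"

definition dom_subdiff :: "('a::euclidean_space \<Rightarrow> ereal) \<Rightarrow> 'a set" where
  "dom_subdiff g = {x. csubdiff g x \<noteq> {}}"

text \<open>DC function with the convention inf - inf = inf.\<close>
definition dcf :: "('a \<Rightarrow> ereal) \<Rightarrow> ('a \<Rightarrow> ereal) \<Rightarrow> 'a \<Rightarrow> ereal" where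
  "dcf g h x = (if g x = \<infinity> then \<infinity> else g x - h x)"

definition indicator_ext :: "'a set \<Rightarrow> 'a \<Rightarrow> ereal" where
  "indicator_ext C x = (if x \<in> C then 0 else \<infinity>)"

definition frechet_subdiff :: "('a::euclidean_space \<Rightarrow> ereal) \<Rightarrow> 'a \<Rightarrow> 'a set" where
  "frechet_subdiff \<phi> x = {y. \<bar>\<phi> x\<bar> \<noteq> \<infinity> \<and>
     Liminf (at x) (\<lambda>z. (\<phi> z - \<phi> x - ereal (y \<bullet> (z - x))) / ereal (norm (z - x))) \<ge> 0}"

definition limiting_subdiff :: "('a::euclidean_space \<Rightarrow> ereal) \<Rightarrow> 'a \<Rightarrow> 'a set" where
  "limiting_subdiff \<phi> x = {y. \<exists>xs ys. xs \<longlonglongrightarrow> x \<and> (\<lambda>j. \<phi> (xs j)) \<longlonglongrightarrow> \<phi> x \<and>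
     (\<forall>j. ys j \<in> frechet_subdiff \<phi> (xs j)) \<and> ys \<longlonglongrightarrow> y}"

text \<open>dist(0,S) = inf of norms; equals infinity for empty S.\<close>
definition dist0 :: "'a::real_normed_vector set \<Rightarrow> ereal" where
  "dist0 S = Inf ((\<lambda>y. ereal (norm y)) ` S)"

definition cluster_points :: "(nat \<Rightarrow> 'a::topological_space) \<Rightarrow> 'a set" where
  "cluster_points xs = {z. \<exists>r. strict_mono r \<and> (xs \<circ> r) \<longlonglongrightarrow> z}"

definition locally_lipschitz_fun :: "('a::metric_space \<Rightarrow> 'b::metric_space) \<Rightarrow> bool" where
  "locally_lipschitz_fun G \<longleftrightarrow>
     (\<forall>x. \<exists>r>0. \<exists>L. \<forall>u\<in>ball x r. \<forall>v\<in>ball x r. dist (G u) (G v) \<le> L * dist u v)"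

definition dca_seq :: "('a::euclidean_space \<Rightarrow> ereal) \<Rightarrow> ('a \<Rightarrow> ereal) \<Rightarrow> 'a set
     \<Rightarrow> (nat \<Rightarrow> 'a) \<Rightarrow> (nat \<Rightarrow> 'a) \<Rightarrow> bool" where
  "dca_seq g h C x y \<longleftrightarrow> x 0 \<in> dom_subdiff h \<and>
     (\<forall>k. y k \<in> csubdiff h (x k) \<and> x (Suc k) \<in> C \<and>
          (\<forall>z\<in>C. g (x (Suc k)) - ereal (y k \<bullet> x (Suc k)) \<le> g z - ereal (y k \<bullet> z)))"

end

theory Submission
  imports Defs
begin


lemma decr:
  fixes r :: "nat \<Rightarrow> real"
  assumes pos: "\<forall>k\<ge>N. r k > 0" and A: "A > 0"
    and rec: "\<forall>k\<ge>N. r (Suc k) powr (2*\<theta>) \<le> A*(r k - r (Suc k))"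
    and k: "k \<ge> N"
  shows "r (Suc k) < r k"
proof -
  have "r (Suc k) > 0" using pos k by simp
  then have "r (Suc k) powr (2*\<theta>) > 0" by simp
  moreover have "r (Suc k) powr (2*\<theta>) \<le> A*(r k - r (Suc k))" using rec k by blast
  ultimately have "A*(r k - r (Suc k)) > 0" by linarith
  then show ?thesis using A by (simp add: zero_less_mult_iff)
qed

lemma rate_zero:
  fixes r :: "nat \<Rightarrow> real"
  assumes pos: "\<forall>k\<ge>N. r k > 0" and lim: "r \<longlonglongrightarrow> 0" and A: "A > 0"
    and rec: "\<forall>k\<ge>N. r (Suc k) powr (2*\<theta>) \<le> A*(r k - r (Suc k))"
    and th: "\<theta> = 0"
  shows False
proof -
  have "(\<lambda>k. A*(r k - r (Suc k))) \<longlonglongrightarrow> A*(0 - 0)"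
    by (intro tendsto_intros lim LIMSEQ_Suc)
  then have "\<forall>\<^sub>F k in sequentially. A*(r k - r (Suc k)) < 1"
    by (simp add: order_tendstoD)
  moreover have "\<forall>\<^sub>F k in sequentially. k \<ge> N" by (simp add: eventually_ge_at_top)
  ultimately obtain k where "A*(r k - r (Suc k)) < 1" "k \<ge> N"
    by (metis (mono_tags, lifting) eventually_at_top_linorder order_refl eventually_conj_iff)
  moreover have "r (Suc k) > 0" using pos \<open>k\<ge>N\<close> by simp
  moreover have "r (Suc k) powr (2*\<theta>) = 1" using calculation th by simp
  ultimately show False using rec by fastforce
qed

lemma rate_geom:
  fixes r :: "nat \<Rightarrow> real"
  assumes pos: "\<forall>k\<ge>N. r k > 0" and lim: "r \<longlonglongrightarrow> 0" and A: "A > 0"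
    and rec: "\<forall>k\<ge>N. r (Suc k) powr (2*\<theta>) \<le> A*(r k - r (Suc k))"
    and th: "0 < \<theta>" "\<theta> \<le> 1/2"
  shows "\<exists>q. 0 < q \<and> q < 1 \<and> (\<exists>K c. \<forall>k\<ge>K. r k \<le> c * q ^ k)"
proof -
  define q where "q = A / (1 + A)"
  have q: "0 < q" "q < 1" using A by (auto simp: q_def)
  have "\<forall>\<^sub>F k in sequentially. r k < 1" using lim by (simp add: order_tendstoD)
  then obtain K0 where K0: "\<forall>k\<ge>K0. r k < 1" by (auto simp: eventually_at_top_linorder)
  define K where "K = max K0 N"
  have step: "r (Suc k) \<le> q * r k" if "k \<ge> K" for k
  proof -
    have p: "r (Suc k) > 0" "r (Suc k) < 1" using pos K0 that by (auto simp: K_def)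
    have "r (Suc k) powr 1 \<le> r (Suc k) powr (2*\<theta>)"
      by (rule powr_mono') (use p th in auto)
    then have "r (Suc k) \<le> A*(r k - r (Suc k))" using rec that p by (fastforce simp: K_def)
    then have "(1+A) * r (Suc k) \<le> A * r k" by (simp add: algebra_simps)
    then show ?thesis using A by (simp add: q_def field_simps)
  qed
  have ind: "r (K + n) \<le> r K * q ^ n" for n
  proof (induction n)
    case 0 then show ?case by simp
  next
    case (Suc n)
    have "r (K + Suc n) \<le> q * r (K + n)" using step[of "K+n"] by simp
    also have "\<dots> \<le> q * (r K * q ^ n)" using Suc q by (intro mult_left_mono) auto
    finally show ?case by (simp add: algebra_simps)
  qed
  have "\<forall>k\<ge>K. r k \<le> (r K / q ^ K) * q ^ k"
  proof (intro allI impI)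
    fix k assume "k \<ge> K"
    then obtain n where n: "k = K + n" using le_Suc_ex by blast
    have "(r K / q ^ K) * q ^ k = r K * q ^ n" using q by (simp add: n power_add)
    then show "r k \<le> (r K / q ^ K) * q ^ k" using ind n by simp
  qed
  then show ?thesis using q by blast
qed

lemma tangent_ineq:
  fixes a b \<beta> :: real
  assumes "0 < a" "a \<le> b" "\<beta> > 0"
  shows "a powr (-\<beta>) - b powr (-\<beta>) \<ge> \<beta> * b powr (-\<beta>-1) * (b - a)"
proof -
  define t where "t = a / b"
  have t: "0 < t" "t \<le> 1" using assms by (auto simp: t_def)
  have "t powr (-\<beta>) = exp (-\<beta> * ln t)" using t by (simp add: powr_def)
  also have "\<dots> \<ge> 1 + (-\<beta> * ln t)" by (rule exp_ge_add_one_self)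
  finally have e: "t powr (-\<beta>) \<ge> 1 - \<beta> * ln t" by simp
  have "ln t \<le> t - 1" using t(1) by (rule ln_le_minus_one)
  then have "\<beta> * ln t \<le> \<beta> * (t - 1)" using assms by (intro mult_left_mono) auto
  with e have e2: "t powr (-\<beta>) - 1 \<ge> \<beta> * (1 - t)" by (simp add: algebra_simps)
  have bpos: "b > 0" using assms by simp
  have "a powr (-\<beta>) = b powr (-\<beta>) * t powr (-\<beta>)"
    using bpos assms by (simp add: t_def powr_divide)
  then have "a powr (-\<beta>) - b powr (-\<beta>) = b powr (-\<beta>) * (t powr (-\<beta>) - 1)"
    by (simp add: algebra_simps)
  also have "\<dots> \<ge> b powr (-\<beta>) * (\<beta> * (1 - t))"
    using e2 by (intro mult_left_mono) auto
  finally have *: "a powr (-\<beta>) - b powr (-\<beta>) \<ge> b powr (-\<beta>) * (\<beta> * (1 - t))" .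
  have e3: "b powr (-\<beta>) / b = b powr (-\<beta>-1)"
    using bpos by (simp add: powr_diff)
  have "b powr (-\<beta>) * (\<beta> * (1 - t)) = \<beta> * (b powr (-\<beta>) / b) * (b - a)"
    using bpos by (simp add: t_def field_simps)
  then have eq: "b powr (-\<beta>) * (\<beta> * (1 - t)) = \<beta> * b powr (-\<beta>-1) * (b - a)"
    using e3 by simp
  show ?thesis using * unfolding eq .
qed

lemma rate_poly:
  fixes r :: "nat \<Rightarrow> real"
  assumes pos: "\<forall>k\<ge>N. r k > 0" and A: "A > 0"
    and rec: "\<forall>k\<ge>N. r (Suc k) powr (2*\<theta>) \<le> A*(r k - r (Suc k))"
    and th: "1/2 < \<theta>" "\<theta> < 1"
  shows "\<exists>K c. \<forall>k\<ge>K. r k \<le> c * real k powr (1 / (1 - 2*\<theta>))"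
proof -
  define \<alpha> where "\<alpha> = 2*\<theta>"
  define \<beta> where "\<beta> = 2*\<theta> - 1"
  have \<beta>: "\<beta> > 0" using th by (simp add: \<beta>_def)
  define s where "s k = r k powr (-\<beta>)" for k
  have dec: "r (Suc k) < r k" if "k \<ge> N" for k using decr[OF pos A rec that] .
  have mon: "r (N + n) \<le> r N" for n
  proof (induction n)
    case 0 then show ?case by simp
  next
    case (Suc n) then show ?case using dec[of "N+n"] by simp
  qed
  have "r N > 0" using pos by simp
  then have sN: "s N > 0" by (simp add: s_def)
  define \<mu> where "\<mu> = min (\<beta> * 2 powr (-\<alpha>) / A) (\<beta> * s N / 2)"
  have \<mu>: "\<mu> > 0" using \<beta> A sN by (simp add: \<mu>_def)
  have incr: "s (Suc k) - s k \<ge> \<mu>" if k: "k \<ge> N" for k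
  proof -
    define a where "a = r (Suc k)"
    define b where "b = r k"
    have ab: "0 < a" "a < b" using pos k dec[OF k] by (auto simp: a_def b_def)
    have rc: "a powr \<alpha> \<le> A * (b - a)" using rec k by (simp add: a_def b_def \<alpha>_def)
    have t: "s (Suc k) - s k \<ge> \<beta> * b powr (-\<beta>-1) * (b - a)"
      unfolding s_def a_def[symmetric] b_def[symmetric]
      by (rule tangent_ineq) (use ab \<beta> in auto)
    have ex: "-\<beta>-1 = -\<alpha>" by (simp add: \<alpha>_def \<beta>_def)
    have bpos: "b > 0" using ab by simp
    show ?thesis
    proof (cases "a \<ge> b/2")
      case True
      have "(b/2) powr \<alpha> \<le> a powr \<alpha>"
        by (rule powr_mono2) (use True ab th in \<open>auto simp: \<alpha>_def\<close>)
      then have "b powr \<alpha> / 2 powr \<alpha> \<le> A * (b - a)"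
        using rc by (simp only: powr_divide)
      moreover have "b powr \<alpha> * 2 powr (-\<alpha>) = b powr \<alpha> / 2 powr \<alpha>"
        by (simp only: powr_minus divide_inverse)
      ultimately have "b powr \<alpha> * 2 powr (-\<alpha>) \<le> A * (b - a)" by simp
      then have "\<beta> * b powr (-\<alpha>) * (b powr \<alpha> * 2 powr (-\<alpha>)) \<le> \<beta> * b powr (-\<alpha>) * (A * (b - a))"
        using \<beta> by (intro mult_left_mono) auto
      moreover have "b powr (-\<alpha>) * b powr \<alpha> = 1" using bpos
        by (simp only: powr_add[symmetric]) simp
      moreover have "\<beta> * b powr (-\<alpha>) * (b powr \<alpha> * 2 powr (-\<alpha>)) = (\<beta> * 2 powr (-\<alpha>)) * (b powr (-\<alpha>) * b powr \<alpha>)"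
        by (simp only: ac_simps)
      moreover have "\<beta> * b powr (-\<alpha>) * (A * (b - a)) = A * (\<beta> * b powr (-\<alpha>) * (b - a))"
        by (simp only: ac_simps)
      ultimately have "\<beta> * 2 powr (-\<alpha>) \<le> A * (\<beta> * b powr (-\<alpha>) * (b - a))"
        by simp
      then have "\<beta> * 2 powr (-\<alpha>) / A \<le> \<beta> * b powr (-\<alpha>) * (b - a)"
        using A by (simp add: divide_le_eq mult.commute)
      then show ?thesis using t ex unfolding \<mu>_def by simp
    next
      case False
      then have "b - a \<ge> b/2" by simp
      then have "\<beta> * b powr (-\<alpha>) * (b - a) \<ge> \<beta> * b powr (-\<alpha>) * (b/2)"
        using \<beta> by (intro mult_left_mono) auto
      moreover have "b powr (-\<alpha>) * b = b powr (-\<beta>)"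
      proof -
        have "b powr (-\<alpha>) * b = b powr (-\<alpha>) * b powr 1" using bpos by simp
        also have "\<dots> = b powr (-\<alpha> + 1)" by (simp only: powr_add)
        also have "-\<alpha> + 1 = -\<beta>" by (simp add: \<alpha>_def \<beta>_def)
        finally show ?thesis .
      qed
      ultimately have L1: "\<beta> * b powr (-\<alpha>) * (b - a) \<ge> \<beta> * s k / 2"
        by (simp add: s_def b_def algebra_simps)
      have L2: "s k \<ge> s N"
      proof -
        obtain n where "k = N + n" using k le_Suc_ex by blast
        then have "r k \<le> r N" using mon by simp
        then show ?thesis unfolding s_def
          by (intro powr_mono2') (use \<beta> pos k in auto)
      qed
      have "\<beta> * b powr (-\<alpha>) * (b - a) \<ge> \<beta> * s N / 2"
      proof -
        have "\<beta> * s N / 2 \<le> \<beta> * s k / 2" using \<beta> L2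
          by (intro divide_right_mono mult_left_mono) auto
        then show ?thesis using L1 by linarith
      qed
      then show ?thesis using t ex unfolding \<mu>_def by simp
    qed
  qed
  have grow: "s (N + n) \<ge> real n * \<mu>" for n
  proof (induction n)
    case 0 then show ?case using sN by simp
  next
    case (Suc n) then show ?case using incr[of "N+n"] by (simp add: algebra_simps)
  qed
  define c where "c = (\<mu>/2) powr (1 / (1 - 2*\<theta>))"
  have "\<forall>k\<ge>2*N+1. r k \<le> c * real k powr (1 / (1 - 2*\<theta>))"
  proof (intro allI impI)
    fix k assume k: "k \<ge> 2*N+1"
    obtain n where n: "k = N + n" using k le_Suc_ex[of N k] by auto
    have nk: "real n \<ge> real k / 2" using k n by simp
    have kpos: "real k > 0" using k by simp
    have sk: "s k \<ge> \<mu> * real k / 2"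
    proof -
      have "\<mu> * real k / 2 \<le> real n * \<mu>" using nk \<mu> by (simp add: mult.commute mult_left_mono)
      then show ?thesis using grow[of n] n by simp
    qed
    have rk: "r k > 0" using pos k by simp
    have "r k = s k powr (-1/\<beta>)"
      using rk \<beta> by (simp add: s_def powr_powr)
    also have "\<dots> \<le> (\<mu> * real k / 2) powr (-1/\<beta>)"
      by (rule powr_mono2') (use \<beta> \<mu> kpos sk in \<open>auto simp: divide_le_0_iff\<close>)
    also have "\<dots> = c * real k powr (1 / (1 - 2*\<theta>))"
    proof -
      have e: "-1/\<beta> = 1 / (1 - 2*\<theta>)" using th by (simp add: \<beta>_def field_simps)
      have eqn: "\<mu> * real k / 2 = (\<mu>/2) * real k" by simp
      show ?thesis unfolding c_def e eqn by (rule powr_mult)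
    qed
    finally show "r k \<le> c * real k powr (1 / (1 - 2*\<theta>))" .
  qed
  then show ?thesis by blast
qed



lemma ev_in_open:
  fixes x :: "nat \<Rightarrow> 'a::euclidean_space"
  assumes b: "bounded (range x)" and U: "open U" and cl: "cluster_points x \<subseteq> U"
  shows "\<forall>\<^sub>F k in sequentially. x k \<in> U"
proof (rule ccontr)
  assume "\<not> ?thesis"
  then obtain r :: "nat \<Rightarrow> nat" where r: "strict_mono r" "\<forall>n. x (r n) \<notin> U"
    using not_eventually_sequentiallyD by blast
  have "bounded (range (x \<circ> r))" using b by (rule bounded_subset) auto
  then obtain l s where s: "strict_mono s" "((x \<circ> r) \<circ> s) \<longlonglongrightarrow> l"
    using bounded_imp_convergent_subsequence by blast
  have "l \<in> cluster_points x" unfolding cluster_points_def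
    using s r by (intro CollectI exI[of _ "r \<circ> s"]) (auto simp: o_assoc strict_mono_o)
  then have "l \<in> U" using cl by blast
  then have "\<forall>\<^sub>F n in sequentially. ((x \<circ> r) \<circ> s) n \<in> U"
    using topological_tendstoD[OF s(2) U \<open>l\<in>U\<close>] by (simp add: o_def)
  then obtain n where "((x \<circ> r) \<circ> s) n \<in> U" by (meson eventually_sequentially order_refl)
  then show False using r by simp
qed

lemma grad_eq:
  fixes H :: "'a::euclidean_space \<Rightarrow> real"
  assumes der: "(H has_derivative (\<lambda>v. G \<bullet> v)) (at u)"
    and sub: "\<forall>z. H z \<ge> H u + y \<bullet> (z - u)"
  shows "y = G"
proof -
  define \<phi> where "\<phi> z = H z - y \<bullet> z" for z
  have d: "(\<phi> has_derivative (\<lambda>v. G \<bullet> v - y \<bullet> v)) (at u)"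
    unfolding \<phi>_def by (intro derivative_intros der)
  have "\<forall>z\<in>UNIV. \<phi> u \<le> \<phi> z"
  proof
    fix z show "\<phi> u \<le> \<phi> z" using sub[rule_format, of z] by (simp add: \<phi>_def inner_diff_right)
  qed
  then have "(\<lambda>v. G \<bullet> v - y \<bullet> v) = (\<lambda>v. 0)"
    using differential_zero_maxmin[OF _ open_UNIV d] by blast
  then have "G \<bullet> (G - y) - y \<bullet> (G - y) = 0" by metis
  then have "(G - y) \<bullet> (G - y) = 0" by (simp add: inner_diff_left)
  then show ?thesis by simp
qed

lemma lip_cball:
  fixes Gr :: "'a::euclidean_space \<Rightarrow> 'a"
  assumes "locally_lipschitz_fun Gr"
  shows "\<exists>L. L-lipschitz_on (cball 0 R) Gr"
proof -
  have ll: "local_lipschitz {0::real} (cball 0 R) (\<lambda>_. Gr)"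
  proof (rule local_lipschitzI)
    fix t :: real and z :: 'a
    obtain r L where r: "r > 0" "\<forall>u\<in>ball z r. \<forall>v\<in>ball z r. dist (Gr u) (Gr v) \<le> L * dist u v"
      using assms unfolding locally_lipschitz_fun_def by blast
    have "(max L 0)-lipschitz_on (cball z (r/2) \<inter> cball 0 R) Gr"
      unfolding lipschitz_on_def
    proof (intro conjI ballI)
      fix u v assume "u \<in> cball z (r/2) \<inter> cball 0 R" "v \<in> cball z (r/2) \<inter> cball 0 R"
      then have "u \<in> ball z r" "v \<in> ball z r" using r by auto
      then have "dist (Gr u) (Gr v) \<le> L * dist u v" using r by blast
      also have "\<dots> \<le> max L 0 * dist u v" by (intro mult_right_mono) auto
      finally show "dist (Gr u) (Gr v) \<le> max L 0 * dist u v" .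
    qed simp
    then show "\<exists>u>0. \<exists>L. \<forall>t\<in>cball t u \<inter> {0}. L-lipschitz_on (cball z u \<inter> cball 0 R) ((\<lambda>_. Gr) t)"
      using r by (intro exI[of _ "r/2"]) auto
  qed
  obtain L where "\<And>t. t \<in> {0::real} \<Longrightarrow> L-lipschitz_on (cball 0 R) ((\<lambda>_. Gr) t)"
    using local_lipschitz_compact_implies_lipschitz[OF ll compact_cball compact_sing] by auto
  then show ?thesis by auto
qed

lemma descent:
  fixes H :: "'a::euclidean_space \<Rightarrow> real"
  assumes der: "\<forall>u. (H has_derivative (\<lambda>v. Gr u \<bullet> v)) (at u)"
    and lip: "L-lipschitz_on S Gr" and S: "convex S" and a: "a \<in> S" and b: "b \<in> S"
  shows "H b \<le> H a + Gr a \<bullet> (b - a) + L/2 * (norm (b - a))\<^sup>2"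
proof -
  define \<phi> where "\<phi> t = H (a + t *\<^sub>R (b - a)) - t * (Gr a \<bullet> (b - a)) - L/2 * t\<^sup>2 * (norm (b - a))\<^sup>2" for t
  have "\<phi> 1 \<le> \<phi> 0"
  proof (rule DERIV_nonpos_imp_nonincreasing[of 0 1 \<phi>])
    fix t :: real assume t: "0 \<le> t" "t \<le> 1"
    define p where "p = a + t *\<^sub>R (b - a)"
    have pS: "p \<in> S"
    proof -
      have "p = (1 - t) *\<^sub>R a + t *\<^sub>R b" by (simp add: p_def algebra_simps)
      then show ?thesis using S a b t by (simp add: convex_alt)
    qed
    have d1: "((\<lambda>t. a + t *\<^sub>R (b - a)) has_derivative (\<lambda>s. s *\<^sub>R (b - a))) (at t)"
      by (auto intro!: derivative_eq_intros)
    have d2: "((\<lambda>t. H (a + t *\<^sub>R (b - a))) has_derivative (\<lambda>s. Gr p \<bullet> (s *\<^sub>R (b - a)))) (at t)"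
      using has_derivative_compose[OF d1, of H "\<lambda>v. Gr p \<bullet> v"] der unfolding p_def by (simp add: o_def)
    have d3: "((\<lambda>t. H (a + t *\<^sub>R (b - a))) has_real_derivative (Gr p \<bullet> (b - a))) (at t)"
    proof -
      have "(\<lambda>s. Gr p \<bullet> (s *\<^sub>R (b - a))) = (*) (Gr p \<bullet> (b - a))" by (auto simp: fun_eq_iff)
      then show ?thesis unfolding has_field_derivative_def using d2 by simp
    qed
    have D: "(\<phi> has_real_derivative (Gr p \<bullet> (b - a) - Gr a \<bullet> (b - a) - L/2 * (2 * t) * (norm (b - a))\<^sup>2)) (at t)"
      unfolding \<phi>_def by (auto intro!: derivative_eq_intros d3)
    have "Gr p \<bullet> (b - a) - Gr a \<bullet> (b - a) = (Gr p - Gr a) \<bullet> (b - a)" by (simp add: inner_diff_left)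
    also have "\<dots> \<le> norm (Gr p - Gr a) * norm (b - a)" by (rule norm_cauchy_schwarz)
    also have "norm (Gr p - Gr a) \<le> L * norm (p - a)"
      using lipschitz_onD[OF lip pS a] by (simp add: dist_norm)
    then have "norm (Gr p - Gr a) * norm (b - a) \<le> L * norm (p - a) * norm (b - a)"
      by (intro mult_right_mono) auto
    also have "norm (p - a) = t * norm (b - a)" using t by (simp add: p_def)
    finally have "Gr p \<bullet> (b - a) - Gr a \<bullet> (b - a) - L/2 * (2 * t) * (norm (b - a))\<^sup>2 \<le> 0"
      by (simp add: power2_eq_square algebra_simps)
    then show "\<exists>y. (\<phi> has_real_derivative y) (at t) \<and> y \<le> 0" using D by blast
  qed simp
  then show ?thesis by (simp add: \<phi>_def)
qed

lemma cocoercive: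
  fixes H :: "'a::euclidean_space \<Rightarrow> real"
  assumes der: "\<forall>u. (H has_derivative (\<lambda>v. Gr u \<bullet> v)) (at u)"
    and lip: "L-lipschitz_on S Gr" and S: "convex S" and L: "L > 0"
    and b: "b \<in> S" and w: "b - (1/L) *\<^sub>R (Gr b - Gr a) \<in> S"
    and sub: "\<forall>z. H z \<ge> H a + Gr a \<bullet> (z - a)"
  shows "H b - H a - Gr a \<bullet> (b - a) \<ge> (norm (Gr b - Gr a))\<^sup>2 / (2*L)"
proof -
  define D where "D = Gr b - Gr a"
  define w where "w = b - (1/L) *\<^sub>R D"
  have wS: "w \<in> S" using w by (simp add: w_def D_def)
  have up: "H w \<le> H b + Gr b \<bullet> (w - b) + L/2 * (norm (w - b))\<^sup>2"
    by (rule descent[OF der lip S b wS])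
  have lo: "H w \<ge> H a + Gr a \<bullet> (w - a)" using sub by blast
  have e1: "Gr b \<bullet> (w - b) = - (Gr b \<bullet> D) / L" by (simp add: w_def)
  have e2: "(norm (w - b))\<^sup>2 = (norm D)\<^sup>2 / L\<^sup>2" using L by (simp add: w_def power_divide)
  have e3: "Gr a \<bullet> (w - a) = Gr a \<bullet> (b - a) - (Gr a \<bullet> D) / L"
    by (simp add: w_def inner_diff_right)
  have e4: "Gr b \<bullet> D - Gr a \<bullet> D = (norm D)\<^sup>2"
    by (simp add: D_def power2_norm_eq_inner inner_diff_left)
  have "H a + Gr a \<bullet> (b - a) - (Gr a \<bullet> D) / L \<le> H b - (Gr b \<bullet> D) / L + L/2 * ((norm D)\<^sup>2 / L\<^sup>2)"
  proof -
    have up': "H w \<le> H b - (Gr b \<bullet> D) / L + L/2 * ((norm D)\<^sup>2 / L\<^sup>2)"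
      using up unfolding e1 e2 by simp
    have lo': "H w \<ge> H a + Gr a \<bullet> (b - a) - (Gr a \<bullet> D) / L" using lo unfolding e3 by simp
    show ?thesis using up' lo' by linarith
  qed
  moreover have "L/2 * ((norm D)\<^sup>2 / L\<^sup>2) = (norm D)\<^sup>2 / (2*L)" using L by (simp add: power2_eq_square field_simps)
  moreover have "(Gr b \<bullet> D) / L - (Gr a \<bullet> D) / L = (norm D)\<^sup>2 / L" using e4 by (simp add: diff_divide_distrib[symmetric])
  moreover have "(norm D)\<^sup>2 / L - (norm D)\<^sup>2 / (2*L) = (norm D)\<^sup>2 / (2*L)" using L by (simp add: field_simps)
  ultimately show ?thesis unfolding D_def by linarith
qed



lemma frechet_elem:
  fixes \<Psi> :: "'a::euclidean_space \<Rightarrow> ereal" and E :: "'a \<Rightarrow> real"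
  assumes b: "\<Psi> b = ereal c"
    and low: "\<forall>z. z \<noteq> b \<longrightarrow> \<Psi> z = \<infinity> \<or> (\<exists>cz. \<Psi> z = ereal cz \<and> cz - c \<ge> v \<bullet> (z - b) - E z)"
    and E: "((\<lambda>z. norm (E z) / norm (z - b)) \<longlongrightarrow> 0) (at b)"
  shows "v \<in> limiting_subdiff \<Psi> b"
proof -
  let ?Q = "\<lambda>z. (\<Psi> z - \<Psi> b - ereal (v \<bullet> (z - b))) / ereal (norm (z - b))"
  have "\<forall>\<^sub>F z in at b. z \<noteq> b" by (simp add: eventually_at_filter)
  then have ev: "\<forall>\<^sub>F z in at b. ereal (- (norm (E z) / norm (z - b))) \<le> ?Q z"
  proof eventually_elim
    case (elim z)
    then have n: "norm (z - b) > 0" by simp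
    from low elim consider "\<Psi> z = \<infinity>" | cz where "\<Psi> z = ereal cz" "cz - c \<ge> v \<bullet> (z - b) - E z"
      by blast
    then show ?case
    proof cases
      case 1
      then show ?thesis using n b by simp
    next
      case 2
      have "- norm (E z) \<le> cz - c - v \<bullet> (z - b)" using 2(2) by (simp add: abs_if)
      then have "- norm (E z) / norm (z - b) \<le> (cz - c - v \<bullet> (z - b)) / norm (z - b)"
        using n by (intro divide_right_mono) auto
      then show ?thesis using 2(1) b n by simp
    qed
  qed
  have lim: "((\<lambda>z. ereal (- (norm (E z) / norm (z - b)))) \<longlongrightarrow> ereal (- 0)) (at b)"
    by (intro tendsto_ereal tendsto_minus E)
  have "Liminf (at b) (\<lambda>z. ereal (- (norm (E z) / norm (z - b)))) = 0"
    using lim_imp_Liminf[OF trivial_limit_at lim] by (simp add: zero_ereal_def)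
  moreover have "Liminf (at b) (\<lambda>z. ereal (- (norm (E z) / norm (z - b)))) \<le> Liminf (at b) ?Q"
    by (rule Liminf_mono[OF ev])
  ultimately have "v \<in> frechet_subdiff \<Psi> b" unfolding frechet_subdiff_def using b by simp
  then show ?thesis unfolding limiting_subdiff_def
    by (intro CollectI exI[of _ "\<lambda>_. b"] exI[of _ "\<lambda>_. v"]) auto
qed



theorem theorem7:
  fixes g h :: "'a::euclidean_space \<Rightarrow> ereal"
    and C :: "'a set"
    and x y :: "nat \<Rightarrow> 'a"
    and fstar :: real
    and M \<theta> :: real and \<eta> :: ereal and V :: "'a set"
  assumes gG: "g \<in> Gamma0" and hG: "h \<in> Gamma0"
    and C: "C \<noteq> {}" "closed C" "convex C"
    and sol: "\<exists>xo\<in>C. \<forall>z\<in>C. dcf g h xo \<le> dcf g h z"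
    and dca: "dca_seq g h C x y"
    and bdd: "bounded (range x)" "bounded (range y)"
    and fcont: "continuous_on (edom (dcf g h)) (dcf g h)"
    and moduli: "\<exists>\<rho>g \<rho>h::real. \<rho>g \<ge> 0 \<and> \<rho>h \<ge> 0 \<and> \<rho>g + \<rho>h > 0 \<and>
        (\<forall>u\<in>C. \<forall>z\<in>C. \<forall>w\<in>csubdiff g u.
            g z \<ge> g u + ereal (w \<bullet> (z - u)) + ereal (\<rho>g / 2 * (norm (z - u))\<^sup>2)) \<and>
        (\<forall>u\<in>C. \<forall>z\<in>C. \<forall>v\<in>csubdiff h u.
            h z \<ge> h u + ereal (v \<bullet> (z - u)) + ereal (\<rho>h / 2 * (norm (z - u))\<^sup>2))"
    and hdiff: "\<exists>H :: 'a \<Rightarrow> real. \<exists>G :: 'a \<Rightarrow> 'a. (\<forall>u. h u = ereal (H u)) \<and>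
        (\<forall>u. (H has_derivative (\<lambda>v. G u \<bullet> v)) (at u)) \<and> locally_lipschitz_fun G"
    and flim: "(\<lambda>k. dcf g h (x k)) \<longlonglongrightarrow> ereal fstar"
    and KL: "M > 0" "0 \<le> \<theta>" "\<theta> < 1" "\<eta> > 0"
      "\<exists>U. open U \<and> cluster_points x \<subseteq> U \<and> U \<subseteq> V"
      "\<forall>u\<in>V. let \<Psi> = (\<lambda>z. dcf g h z + indicator_ext C z - ereal fstar) in
          (0 < \<Psi> u \<and> \<Psi> u < \<eta> \<longrightarrow>
            ereal (M * (1 - \<theta>) * (real_of_ereal (\<Psi> u)) powr (- \<theta>)) * dist0 (limiting_subdiff \<Psi> u) \<ge> 1)"
  shows "(\<theta> = 0 \<longrightarrow> (\<forall>\<^sub>F k in sequentially. dcf g h (x k) = ereal fstar))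
    \<and> (0 < \<theta> \<and> \<theta> \<le> 1/2 \<longrightarrow> (\<exists>q. 0 < q \<and> q < 1 \<and>
          (\<lambda>k. real_of_ereal (dcf g h (x k)) - fstar) \<in> O(\<lambda>k. q ^ k)))
    \<and> (1/2 < \<theta> \<and> \<theta> < 1 \<longrightarrow>
          (\<lambda>k. real_of_ereal (dcf g h (x k)) - fstar) \<in> O(\<lambda>k. real k powr (1 / (1 - 2 * \<theta>))))"
proof -
  obtain H Gr where hH: "\<forall>u. h u = ereal (H u)"
    and der: "\<forall>u. (H has_derivative (\<lambda>v. Gr u \<bullet> v)) (at u)" and ll: "locally_lipschitz_fun Gr"
    using hdiff by blast
  have dcaU: "\<And>k. y k \<in> csubdiff h (x k) \<and> x (Suc k) \<in> C \<and>
          (\<forall>z\<in>C. g (x (Suc k)) - ereal (y k \<bullet> x (Suc k)) \<le> g z - ereal (y k \<bullet> z))"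
    using dca unfolding dca_seq_def by blast
  have ysub: "\<forall>z. H z \<ge> H (x k) + y k \<bullet> (z - x k)" for k
  proof
    fix z
    have "y k \<in> csubdiff h (x k)" using dcaU by blast
    then have "h z \<ge> h (x k) + ereal (y k \<bullet> (z - x k))" unfolding csubdiff_def by blast
    then show "H z \<ge> H (x k) + y k \<bullet> (z - x k)" using hH by simp
  qed
  have yGr: "y k = Gr (x k)" for k using grad_eq[OF der[rule_format] ysub] .
  have gsub: "\<forall>z. H z \<ge> H (x k) + Gr (x k) \<bullet> (z - x k)" for k using ysub yGr by metis
  obtain R0 where R0: "\<forall>k. norm (x k) \<le> R0" using bdd(1) by (auto simp: bounded_iff)
  have R0nn: "R0 \<ge> 0" using R0 norm_ge_zero order_trans by blast
  obtain L1 where L1: "L1-lipschitz_on (cball 0 (R0+1)) Gr" using lip_cball[OF ll] by blast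
  have L1nn: "L1 \<ge> 0" using L1 lipschitz_on_nonneg by blast
  define B where "B = norm (Gr 0) + L1 * (R0 + 1)"
  have gB: "norm (Gr u) \<le> B" if u: "u \<in> cball 0 (R0+1)" for u
  proof -
    have z: "0 \<in> cball 0 (R0+1)" using R0nn by simp
    have "dist (Gr u) (Gr 0) \<le> L1 * dist u 0" using lipschitz_onD[OF L1 u z] .
    also have "\<dots> \<le> L1 * (R0 + 1)" using u L1nn by (intro mult_left_mono) (auto simp: dist_norm)
    finally have "norm (Gr u - Gr 0) \<le> L1 * (R0 + 1)" by (simp add: dist_norm)
    then show ?thesis unfolding B_def using norm_triangle_sub[of "Gr u" "Gr 0"] by linarith
  qed
  have Bnn: "B \<ge> 0" unfolding B_def using L1nn R0nn by simp
  define L where "L = max (max L1 (2*B)) 1"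
  have Lpos: "L > 0" by (simp add: L_def)
  have Llip: "L-lipschitz_on (cball 0 (R0+1)) Gr" by (rule lipschitz_on_le[OF L1]) (simp add: L_def)
  have xin: "x k \<in> cball 0 (R0+1)" for k using R0[rule_format, of k] by simp
  have coco: "H (x (Suc k)) - H (x k) - Gr (x k) \<bullet> (x (Suc k) - x k) \<ge> (norm (Gr (x (Suc k)) - Gr (x k)))\<^sup>2 / (2*L)" for k
  proof (rule cocoercive[OF der Llip convex_cball Lpos xin _ gsub])
    let ?b = "x (Suc k)" and ?a = "x k"
    have "norm (?b - (1/L) *\<^sub>R (Gr ?b - Gr ?a)) \<le> norm ?b + (1/L) * norm (Gr ?b - Gr ?a)"
      using norm_triangle_ineq4[of ?b "(1/L) *\<^sub>R (Gr ?b - Gr ?a)"] Lpos by simp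
    also have "norm (Gr ?b - Gr ?a) \<le> 2 * B"
      using norm_triangle_ineq4[of "Gr ?b" "Gr ?a"] gB[OF xin[of "Suc k"]] gB[OF xin[of k]] by linarith
    then have "(1/L) * norm (Gr ?b - Gr ?a) \<le> 1"
      using Lpos by (simp add: L_def field_simps)
    finally have "norm (?b - (1/L) *\<^sub>R (Gr ?b - Gr ?a)) \<le> norm ?b + 1" by simp
    then show "?b - (1/L) *\<^sub>R (Gr ?b - Gr ?a) \<in> cball 0 (R0+1)" using R0[rule_format, of "Suc k"] by simp
  qed
  have gnm: "g u \<noteq> -\<infinity>" for u using gG unfolding Gamma0_def proper_fun_def by blast
  have "\<forall>\<^sub>F k in sequentially. dcf g h (x k) < \<infinity>"
    using flim by (rule order_tendstoD) simp
  then obtain K0 where K0: "\<forall>k\<ge>K0. dcf g h (x k) < \<infinity>" by (auto simp: eventually_sequentially)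
  define gr where "gr k = real_of_ereal (g (x k))" for k
  define F where "F k = gr k - H (x k)" for k
  have gfin: "g (x k) = ereal (gr k)" if "k \<ge> K0" for k
  proof -
    have "g (x k) \<noteq> \<infinity>" using K0 that unfolding dcf_def by (auto split: if_splits)
    then show ?thesis using gnm[of "x k"] unfolding gr_def by (cases "g (x k)") auto
  qed
  have dcfF: "dcf g h (x k) = ereal (F k)" if "k \<ge> K0" for k
    using gfin[OF that] hH unfolding dcf_def F_def by simp
  define K1 where "K1 = Suc K0"
  have xC: "x k \<in> C" if kk: "k \<ge> K1" for k
  proof -
    obtain j where "k = Suc j" using Suc_le_D[OF kk[unfolded K1_def]] by blast
    then show ?thesis using dcaU by blast
  qed
  have opt: "gr (Suc k) - Gr (x k) \<bullet> x (Suc k) \<le> gz - Gr (x k) \<bullet> z"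
    if "k \<ge> K0" "z \<in> C" "g z = ereal gz" for k z gz
  proof -
    have "g (x (Suc k)) - ereal (y k \<bullet> x (Suc k)) \<le> g z - ereal (y k \<bullet> z)" using dcaU that(2) by blast
    then show ?thesis using gfin[of "Suc k"] that yGr by simp
  qed
  have decr: "F k - F (Suc k) \<ge> (norm (Gr (x (Suc k)) - Gr (x k)))\<^sup>2 / (2*L)" if "k \<ge> K1" for k
  proof -
    have "gr (Suc k) - Gr (x k) \<bullet> x (Suc k) \<le> gr k - Gr (x k) \<bullet> x k"
      using opt[of k "x k" "gr k"] xC[OF that] gfin[of k] that by (simp add: K1_def)
    then show ?thesis using coco[of k] unfolding F_def by (simp add: inner_diff_right)
  qed
  have "(\<lambda>k. ereal (F k)) \<longlonglongrightarrow> ereal fstar"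
  proof -
    have "\<forall>\<^sub>F k in sequentially. dcf g h (x k) = ereal (F k)"
      using dcfF by (auto simp: eventually_sequentially)
    then show ?thesis using flim tendsto_cong by fastforce
  qed
  then have Flim: "F \<longlonglongrightarrow> fstar" by (simp add: lim_ereal)
  define rr where "rr k = F k - fstar" for k
  have rlim: "rr \<longlonglongrightarrow> 0" unfolding rr_def using tendsto_diff[OF Flim tendsto_const[of fstar]] by simp
  have rdec: "rr (Suc k) \<le> rr k" if "k \<ge> K1" for k
  proof -
    have "(norm (Gr (x (Suc k)) - Gr (x k)))\<^sup>2 / (2*L) \<ge> 0" using Lpos by simp
    then show ?thesis using decr[OF that] unfolding rr_def by simp
  qed
  have rmon: "rr (k + n) \<le> rr k" if "k \<ge> K1" for k n
  proof (induction n)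
    case 0 then show ?case by simp
  next
    case (Suc n) then show ?case using rdec[of "k+n"] that by simp
  qed
  have rnn: "rr k \<ge> 0" if "k \<ge> K1" for k
  proof (rule LIMSEQ_le_const2[OF rlim])
    show "\<exists>N. \<forall>n\<ge>N. rr n \<le> rr k"
    proof (intro exI allI impI)
      fix n assume "k \<le> n"
      then show "rr n \<le> rr k" using rmon[OF that, of "n - k"] by simp
    qed
  qed
  have realdcf: "real_of_ereal (dcf g h (x k)) - fstar = rr k" if "k \<ge> K0" for k
    using dcfF[OF that] unfolding rr_def by simp
  show ?thesis
  proof (cases "\<exists>k\<ge>K1. rr k = 0")
    case True
    then obtain k0 where k0: "k0 \<ge> K1" "rr k0 = 0" by blast
    have z: "rr n = 0" if "n \<ge> k0" for n
    proof -
      have "rr n \<le> rr k0" using rmon[OF k0(1), of "n - k0"] that by simp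
      moreover have "rr n \<ge> 0" using rnn that k0 by simp
      ultimately show ?thesis using k0 by simp
    qed
    have ev0: "\<forall>\<^sub>F n in sequentially. real_of_ereal (dcf g h (x n)) - fstar = 0"
      unfolding eventually_sequentially
      using z realdcf k0 by (intro exI[of _ k0]) (auto simp: K1_def)
    have bo: "(\<lambda>k. real_of_ereal (dcf g h (x k)) - fstar) \<in> O(f)" for f :: "nat \<Rightarrow> real"
      by (rule bigoI[where c=0]) (use ev0 in \<open>auto elim!: eventually_mono\<close>)
    have "\<forall>\<^sub>F n in sequentially. dcf g h (x n) = ereal fstar"
      unfolding eventually_sequentially
      using z dcfF k0 unfolding rr_def by (intro exI[of _ k0]) (auto simp: K1_def)
    then show ?thesis using bo by (auto intro: exI[of _ "1/2"])
  next
    case False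
    then have rpos: "\<forall>k\<ge>K1. rr k > 0" using rnn by force
    obtain U where U: "open U" "cluster_points x \<subseteq> U" "U \<subseteq> V" using KL(5) by blast
    have evV: "\<forall>\<^sub>F k in sequentially. x k \<in> V"
      using ev_in_open[OF bdd(1) U(1,2)] U(3) by (auto elim!: eventually_mono)
    have "(\<lambda>k. ereal (rr k)) \<longlonglongrightarrow> ereal 0" using rlim by (simp add: lim_ereal)
    then have evE: "\<forall>\<^sub>F k in sequentially. ereal (rr k) < \<eta>"
      using KL(4) by (intro order_tendstoD(2)) (auto simp: zero_ereal_def)
    obtain K2' where K2': "\<forall>k\<ge>K2'. x k \<in> V \<and> ereal (rr k) < \<eta>"
      using eventually_conj[OF evV evE] by (auto simp: eventually_sequentially)
    define K2 where "K2 = max K1 K2'"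
    define A where "A = (M * (1 - \<theta>))\<^sup>2 * (2 * L)"
    have Apos: "A > 0" using KL(1,3) Lpos by (simp add: A_def)
    define \<Psi> where "\<Psi> = (\<lambda>z. dcf g h z + indicator_ext C z - ereal fstar)"
    have rec: "\<forall>k\<ge>K2. rr (Suc k) powr (2*\<theta>) \<le> A * (rr k - rr (Suc k))"
    proof (intro allI impI)
      fix k assume k: "k \<ge> K2"
      define u where "u = x (Suc k)"
      define a where "a = x k"
      define nD where "nD = norm (Gr a - Gr u)"
      have kK1: "k \<ge> K1" "Suc k \<ge> K1" "k \<ge> K0" "Suc k \<ge> K0" using k by (auto simp: K2_def K1_def)
      have rp: "rr (Suc k) > 0" using rpos kK1 by simp
      have uV: "u \<in> V" "ereal (rr (Suc k)) < \<eta>" using K2' k by (auto simp: K2_def u_def)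
      have uC: "u \<in> C" using xC kK1 by (simp add: u_def)
      have Psiu: "\<Psi> u = ereal (rr (Suc k))"
        using dcfF[OF kK1(4)] uC unfolding \<Psi>_def u_def indicator_ext_def rr_def by simp
      have mem: "Gr a - Gr u \<in> limiting_subdiff \<Psi> u"
      proof (rule frechet_elem[where \<Psi>=\<Psi> and b=u and c="rr (Suc k)" and E="\<lambda>z. H z - H u - Gr u \<bullet> (z - u)"])
        show "\<Psi> u = ereal (rr (Suc k))" by (rule Psiu)
        show "((\<lambda>z. norm (H z - H u - Gr u \<bullet> (z - u)) / norm (z - u)) \<longlongrightarrow> 0) (at u)"
          using der[rule_format, of u] unfolding has_derivative_iff_norm by simp
        show "\<forall>z. z \<noteq> u \<longrightarrow> \<Psi> z = \<infinity> \<or> (\<exists>cz. \<Psi> z = ereal cz \<and>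
            cz - rr (Suc k) \<ge> (Gr a - Gr u) \<bullet> (z - u) - (H z - H u - Gr u \<bullet> (z - u)))"
        proof (intro allI impI)
          fix z assume "z \<noteq> u"
          have dnm: "dcf g h z \<noteq> -\<infinity>" using gnm[of z] hH unfolding dcf_def by (cases "g z") auto
          show "\<Psi> z = \<infinity> \<or> (\<exists>cz. \<Psi> z = ereal cz \<and>
            cz - rr (Suc k) \<ge> (Gr a - Gr u) \<bullet> (z - u) - (H z - H u - Gr u \<bullet> (z - u)))"
          proof (cases "z \<in> C \<and> g z \<noteq> \<infinity>")
            case False
            then consider "z \<notin> C" | "g z = \<infinity>" by blast
            then show ?thesis
            proof cases
              case 1
              then show ?thesis using dnm unfolding \<Psi>_def indicator_ext_def by simp
            next
              case 2
              then show ?thesis unfolding \<Psi>_def dcf_def by (cases "indicator_ext C z") auto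
            qed
          next
            case True
            then obtain gz where gz: "g z = ereal gz" using gnm[of z] by (cases "g z") auto
            have o: "gr (Suc k) - Gr a \<bullet> u \<le> gz - Gr a \<bullet> z"
              using opt[OF kK1(3) _ gz] True unfolding a_def u_def by blast
            have "\<Psi> z = ereal (gz - H z - fstar)"
              using gz True hH unfolding \<Psi>_def dcf_def indicator_ext_def by simp
            moreover have "(gz - H z - fstar) - rr (Suc k) \<ge> (Gr a - Gr u) \<bullet> (z - u) - (H z - H u - Gr u \<bullet> (z - u))"
              using o unfolding rr_def F_def u_def by (simp add: inner_diff_left inner_diff_right)
            ultimately show ?thesis by blast
          qed
        qed
      qed
      have KLu: "ereal (M * (1 - \<theta>) * (rr (Suc k)) powr (- \<theta>)) * dist0 (limiting_subdiff \<Psi> u) \<ge> 1"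
        using KL(6)[rule_format, OF uV(1)] Psiu rp uV(2) unfolding \<Psi>_def[symmetric] Let_def by simp
      have dle: "dist0 (limiting_subdiff \<Psi> u) \<le> ereal nD"
        unfolding dist0_def nD_def by (rule INF_lower) (rule mem)
      define c1 where "c1 = M * (1 - \<theta>) * (rr (Suc k)) powr (- \<theta>)"
      have c1: "c1 > 0" using KL(1,3) rp by (simp add: c1_def)
      have q1: "1 \<le> ereal c1 * dist0 (limiting_subdiff \<Psi> u)" using KLu unfolding c1_def .
      have q2: "ereal c1 * dist0 (limiting_subdiff \<Psi> u) \<le> ereal c1 * ereal nD"
        by (rule ereal_mult_left_mono[OF dle]) (use c1 in simp)
      have "1 \<le> ereal c1 * ereal nD" using order_trans[OF q1 q2] .
      then have one: "1 \<le> c1 * nD" by simp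
      have pp: "rr (Suc k) powr \<theta> * rr (Suc k) powr (-\<theta>) = 1"
        using rp by (simp add: powr_add[symmetric])
      have nDnn: "nD \<ge> 0" by (simp add: nD_def)
      have "rr (Suc k) powr \<theta> \<le> rr (Suc k) powr \<theta> * (c1 * nD)"
        using one by (simp add: mult_le_cancel_left1)
      also have "\<dots> = M * (1 - \<theta>) * nD" using pp unfolding c1_def by (simp add: algebra_simps)
      finally have t1: "rr (Suc k) powr \<theta> \<le> M * (1 - \<theta>) * nD" .
      have "rr (Suc k) powr (2*\<theta>) = rr (Suc k) powr \<theta> * rr (Suc k) powr \<theta>"
        by (simp add: powr_add[symmetric])
      also have "\<dots> \<le> (M * (1 - \<theta>) * nD) * (M * (1 - \<theta>) * nD)"
        using t1 by (intro mult_mono) (auto intro: order_trans[OF powr_ge_zero t1])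
      also have "\<dots> = (M * (1 - \<theta>))\<^sup>2 * nD\<^sup>2" by (simp add: power2_eq_square algebra_simps)
      also have "\<dots> \<le> (M * (1 - \<theta>))\<^sup>2 * (2 * L * (rr k - rr (Suc k)))"
      proof (rule mult_left_mono)
        have "nD\<^sup>2 / (2*L) \<le> F k - F (Suc k)" using decr[OF kK1(1)]
          unfolding nD_def a_def u_def by (simp add: norm_minus_commute)
        then show "nD\<^sup>2 \<le> 2 * L * (rr k - rr (Suc k))"
          using Lpos unfolding rr_def by (simp add: divide_le_eq mult.commute)
      qed simp
      finally show "rr (Suc k) powr (2*\<theta>) \<le> A * (rr k - rr (Suc k))" by (simp add: A_def algebra_simps)
    qed
    have pos2: "\<forall>k\<ge>K2. rr k > 0" using rpos by (simp add: K2_def)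
    have eqr: "\<forall>\<^sub>F k in sequentially. real_of_ereal (dcf g h (x k)) - fstar = rr k"
      using realdcf by (auto simp: eventually_sequentially)
    have P1: "\<theta> = 0 \<longrightarrow> (\<forall>\<^sub>F k in sequentially. dcf g h (x k) = ereal fstar)"
      using rate_zero[OF pos2 rlim Apos rec] by blast
    have P2: "0 < \<theta> \<and> \<theta> \<le> 1/2 \<longrightarrow> (\<exists>q. 0 < q \<and> q < 1 \<and>
          (\<lambda>k. real_of_ereal (dcf g h (x k)) - fstar) \<in> O(\<lambda>k. q ^ k))"
    proof
      assume th: "0 < \<theta> \<and> \<theta> \<le> 1/2"
      obtain q K c where q: "0 < q" "q < 1" and bd: "\<forall>k\<ge>K. rr k \<le> c * q ^ k"
        using rate_geom[OF pos2 rlim Apos rec] th by blast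
      have "(\<lambda>k. real_of_ereal (dcf g h (x k)) - fstar) \<in> O(\<lambda>k. q ^ k)"
      proof (rule bigoI[where c=c])
        have "\<forall>\<^sub>F k in sequentially. k \<ge> K \<and> k \<ge> K2" unfolding eventually_sequentially by (intro exI[of _ "max K K2"]) simp
        then show "\<forall>\<^sub>F k in sequentially. norm (real_of_ereal (dcf g h (x k)) - fstar) \<le> c * norm (q ^ k)"
          using eqr
        proof eventually_elim
          case (elim k)
          then show ?case using bd pos2 q by (simp add: abs_of_pos)
        qed
      qed
      then show "\<exists>q. 0 < q \<and> q < 1 \<and> (\<lambda>k. real_of_ereal (dcf g h (x k)) - fstar) \<in> O(\<lambda>k. q ^ k)"
        using q by blast
    qed
    have P3: "1/2 < \<theta> \<and> \<theta> < 1 \<longrightarrow>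
          (\<lambda>k. real_of_ereal (dcf g h (x k)) - fstar) \<in> O(\<lambda>k. real k powr (1 / (1 - 2 * \<theta>)))"
    proof
      assume th: "1/2 < \<theta> \<and> \<theta> < 1"
      obtain K c where bd: "\<forall>k\<ge>K. rr k \<le> c * real k powr (1 / (1 - 2*\<theta>))"
        using rate_poly[OF pos2 Apos rec] th by blast
      show "(\<lambda>k. real_of_ereal (dcf g h (x k)) - fstar) \<in> O(\<lambda>k. real k powr (1 / (1 - 2 * \<theta>)))"
      proof (rule bigoI[where c=c])
        have "\<forall>\<^sub>F k in sequentially. k \<ge> K \<and> k \<ge> K2" unfolding eventually_sequentially by (intro exI[of _ "max K K2"]) simp
        then show "\<forall>\<^sub>F k in sequentially. norm (real_of_ereal (dcf g h (x k)) - fstar) \<le> c * norm (real k powr (1 / (1 - 2 * \<theta>)))"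
          using eqr
        proof eventually_elim
          case (elim k)
          then show ?case using bd pos2 by (simp add: abs_of_pos)
        qed
      qed
    qed
    show ?thesis using P1 P2 P3 by blast
  qed
qed

end
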